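(* Let $(X,U)$ be a minimizer of Problem 1 (defined in the context). Then: (a) The linear matrix equation $$\begin{bmatrix} K & H \\ G & F \end{bmatrix}\begin{bmatrix} X \\ Z \end{bmatrix} = \begin{bmatrix} U \\ V \end{bmatrix}$$ has a unique solution $(K,H,G,F)$ with $K\in\mathbb{R}^{m\times n}$, $H\in\mathbb{R}^{m\times n(N-1)}$, $G\in\mathbb{R}^{n(N-1)\times n}$, $F\in\mathbb{R}^{n(N-1)\times n(N-1)}$. (b) For every initial state $x_0\in\mathbb{R}^n$, the closed loop of the plant $x(t+1)=Ax(t)+Bu(t)$, $x(0)=x_0$, with the compensator $z(t+1)=Fz(t)+Gx(t)$, $u(t)=Hz(t)+Kx(t)$, $z(0)=0$, generates the input sequence $u(t)=U(\mathrm{e}_{t+1}\otimes x_0)$ and state sequence $x(t)=X(\mathrm{e}_{t+1}\otimes x_0)$ for $t=0,1,\dots,N-1$ (where $\mathrm{e}_{t+1}\in\mathbb{R}^N$), and it drives the plant state to $x(N)=0$. (c) For every $x_0\in\{\mathrm{e}_1,\dots,\mathrm{e}_n\}$ (standard basis of $\mathbb{R}^n$), the output $y(t)=Cx(t)+Du(t)$ of this closed loop satisfies $-s\le y(t)\le s$ (componentwise) for $t=0,1,\dots,N-1$. (d) The closed-loop augmented system $\psi(t+1)=\mathcal{A}_{cl}\psi(t)$, with $\psi=(x,z)$ and $\mathcal{A}_{cl}=\begin{bmatrix}A+BK & BH\\ G & F\end{bmatrix}$, is internally stable (i.e. $\mathcal{A}_{cl}$ is Schur stable).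
   Context: Plant: discrete-time LTI system $x(t+1)=Ax(t)+Bu(t)$, $y(t)=Cx(t)+Du(t)$, with $x(t)\in\mathbb{R}^n$, $u(t)\in\mathbb{R}^m$ ($m\le n$), $y(t)\in\mathbb{R}^p$, real constant matrices $A,B,C,D$ of compatible sizes, and $(A,B)$ reachable. $N\ge 2$ is a horizon length. $\mathrm{e}_j$ denotes the $j$-th standard basis vector of the appropriate dimension. $P\in\mathbb{R}^{N\times N}$ is the nilpotent shift matrix $P=\begin{bmatrix}0 & 0\\ I_{N-1} & 0\end{bmatrix}$ (so $P\mathrm{e}_j=\mathrm{e}_{j+1}$ for $j<N$ and $P\mathrm{e}_N=0$). $\otimes$ is the Kronecker product. For a matrix $W$, $\|W\|_1=\sum_{i,j}|w_{ij}|$, and $\mathrm{abs}(W)$ is the entrywise absolute value. $\mathbf{1}_k\in\mathbb{R}^k$ is the all-ones vector. Given $s\in\mathbb{R}^p$ (componentwise nonnegative), Problem 1 is: minimize $\|U\|_1$ over $X\in\mathbb{R}^{n\times nN}$, $U\in\mathbb{R}^{m\times nN}$ subject to $AX+BU=X(P\otimes I_n)$, $X(\mathrm{e}_1\otimes I_n)=I_n$ (with $\mathrm{e}_1\in\mathbb{R}^N$), and $\mathrm{abs}(CX+DU)\le s(\mathbf{1}_n\otimes\mathbf{1}_N)^\top$ entrywise. Define $Z=\begin{bmatrix}0_{n(N-1)\times n} & I_{n(N-1)}\end{bmatrix}\in\mathbb{R}^{n(N-1)\times nN}$ and $V=Z(P\otimes I_n)$. *)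

theory Defs
  imports "Jordan_Normal_Form.Matrix" "Jordan_Normal_Form.Char_Poly"
begin

(* All indices are 0-based: the paper's e_j is unit_vec k (j-1). *)

definition kron_mat :: "real mat \<Rightarrow> real mat \<Rightarrow> real mat" where
  "kron_mat M1 M2 = mat (dim_row M1 * dim_row M2) (dim_col M1 * dim_col M2)
     (\<lambda>(i,j). M1 $$ (i div dim_row M2, j div dim_col M2) * M2 $$ (i mod dim_row M2, j mod dim_col M2))"

definition kron_vec :: "real vec \<Rightarrow> real vec \<Rightarrow> real vec" where
  "kron_vec a b = vec (dim_vec a * dim_vec b) (\<lambda>i. a $ (i div dim_vec b) * b $ (i mod dim_vec b))"

definition shiftP :: "nat \<Rightarrow> real mat" where
  "shiftP N = mat N N (\<lambda>(i,j). if i = j + 1 then 1 else 0)"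

definition norm1_mat :: "real mat \<Rightarrow> real" where
  "norm1_mat W = (\<Sum>i<dim_row W. \<Sum>j<dim_col W. \<bar>W $$ (i,j)\<bar>)"

definition reachable :: "nat \<Rightarrow> nat \<Rightarrow> real mat \<Rightarrow> real mat \<Rightarrow> bool" where
  "reachable n m A B \<longleftrightarrow> (\<forall>x \<in> carrier_vec n. \<exists>u. (\<forall>k. u k \<in> carrier_vec m) \<and>
      x = finsum_vec TYPE(real) n (\<lambda>k. (A ^\<^sub>m (n - 1 - k)) *\<^sub>v (B *\<^sub>v u k)) {..<n})"

definition feasible1 :: "nat \<Rightarrow> nat \<Rightarrow> nat \<Rightarrow> nat \<Rightarrow> real mat \<Rightarrow> real mat \<Rightarrow> real mat \<Rightarrow> real mat
    \<Rightarrow> real vec \<Rightarrow> real mat \<Rightarrow> real mat \<Rightarrow> bool" where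
  "feasible1 n m p N A B C D s X U \<longleftrightarrow>
     X \<in> carrier_mat n (n * N) \<and> U \<in> carrier_mat m (n * N) \<and>
     A * X + B * U = X * kron_mat (shiftP N) (1\<^sub>m n) \<and>
     X * kron_mat (mat_of_cols N [unit_vec N 0]) (1\<^sub>m n) = 1\<^sub>m n \<and>
     (\<forall>i<p. \<forall>j<n * N. \<bar>(C * X + D * U) $$ (i,j)\<bar> \<le> s $ i)"

definition minimizer1 :: "nat \<Rightarrow> nat \<Rightarrow> nat \<Rightarrow> nat \<Rightarrow> real mat \<Rightarrow> real mat \<Rightarrow> real mat \<Rightarrow> real mat
    \<Rightarrow> real vec \<Rightarrow> real mat \<Rightarrow> real mat \<Rightarrow> bool" where
  "minimizer1 n m p N A B C D s X U \<longleftrightarrow>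
     feasible1 n m p N A B C D s X U \<and>
     (\<forall>X' U'. feasible1 n m p N A B C D s X' U' \<longrightarrow> norm1_mat U \<le> norm1_mat U')"

definition Zmat :: "nat \<Rightarrow> nat \<Rightarrow> real mat" where
  "Zmat n N = mat (n * (N - 1)) (n * N) (\<lambda>(i,j). if j = i + n then 1 else 0)"

definition Vmat :: "nat \<Rightarrow> nat \<Rightarrow> real mat" where
  "Vmat n N = Zmat n N * kron_mat (shiftP N) (1\<^sub>m n)"

fun cl_traj :: "real mat \<Rightarrow> real mat \<Rightarrow> real mat \<Rightarrow> real mat \<Rightarrow> real mat \<Rightarrow> real mat
    \<Rightarrow> real vec \<Rightarrow> real vec \<Rightarrow> nat \<Rightarrow> real vec \<times> real vec" where
  "cl_traj A B K H G F x0 z0 0 = (x0, z0)"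
| "cl_traj A B K H G F x0 z0 (Suc t) =
     (let (x, z) = cl_traj A B K H G F x0 z0 t; u = H *\<^sub>v z + K *\<^sub>v x
      in (A *\<^sub>v x + B *\<^sub>v u, F *\<^sub>v z + G *\<^sub>v x))"

definition cl_x where "cl_x A B K H G F x0 z0 t = fst (cl_traj A B K H G F x0 z0 t)"
definition cl_z where "cl_z A B K H G F x0 z0 t = snd (cl_traj A B K H G F x0 z0 t)"
definition cl_u where
  "cl_u A B K H G F x0 z0 t = H *\<^sub>v cl_z A B K H G F x0 z0 t + K *\<^sub>v cl_x A B K H G F x0 z0 t"

definition schur_stable :: "real mat \<Rightarrow> bool" where
  "schur_stable M \<longleftrightarrow> (\<forall>ev. eigenvalue (map_mat complex_of_real M) ev \<longrightarrow> cmod ev < 1)"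

end

theory Submission
  imports Defs
begin

definition shm :: "nat \<Rightarrow> nat \<Rightarrow> real mat" where
  "shm K d = mat K K (\<lambda>(i,j). if i = j + d then 1 else 0)"

lemma divmod_shift: fixes i j n :: nat assumes "n > 0"
  shows "(i div n = j div n + 1 \<and> i mod n = j mod n) \<longleftrightarrow> i = j + n"
proof
  assume h: "i div n = j div n + 1 \<and> i mod n = j mod n"
  have "i = n * (i div n) + i mod n" by simp
  also have "\<dots> = n * (j div n) + j mod n + n" using h by (simp add: algebra_simps)
  finally show "i = j + n" by simp
next
  assume "i = j + n" thus "i div n = j div n + 1 \<and> i mod n = j mod n" using assms by simp
qed

lemma kronM: "kron_mat (shiftP N) (1\<^sub>m n) = shm (n*N) n"
proof (rule eq_matI)
  fix i j assume i: "i < dim_row (shm (n*N) n)" and j: "j < dim_col (shm (n*N) n)"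
  hence ij: "i < n*N" "j < n*N" by (auto simp: shm_def)
  hence n: "n > 0" by (cases n) auto
  have a: "i div n < N" "j div n < N" using ij by (auto simp: less_mult_imp_div_less mult.commute)
  have b: "i mod n < n" "j mod n < n" using n by auto
  show "kron_mat (shiftP N) (1\<^sub>m n) $$ (i, j) = shm (n*N) n $$ (i, j)"
    using ij a b divmod_shift[OF n, of i j]
    by (auto simp: kron_mat_def shiftP_def shm_def mult.commute)
qed (auto simp: kron_mat_def shiftP_def shm_def mult.commute)

lemma kronE: assumes "N > 0"
  shows "kron_mat (mat_of_cols N [unit_vec N 0]) (1\<^sub>m n) = mat (n*N) n (\<lambda>(i,j). if i = j then 1 else 0)"
proof (rule eq_matI)
  fix i j assume i: "i < dim_row (mat (n*N) n (\<lambda>(i,j). if i = j then (1::real) else 0))"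
     and j: "j < dim_col (mat (n*N) n (\<lambda>(i,j). if i = j then (1::real) else 0))"
  hence ij: "i < n*N" "j < n" by auto
  hence n: "n > 0" by auto
  have a: "i div n < N" using ij by (auto simp: less_mult_imp_div_less mult.commute)
  have b: "i mod n < n" using n by auto
  have c: "(i div n = 0 \<and> i mod n = j) \<longleftrightarrow> i = j" using ij
    by (metis div_less div_mult_mod_eq mod_less mult_0_right add_0)
  show "kron_mat (mat_of_cols N [unit_vec N 0]) (1\<^sub>m n) $$ (i, j) = mat (n*N) n (\<lambda>(i,j). if i = j then 1 else 0) $$ (i, j)"
    using ij a b c assms by (auto simp: kron_mat_def mat_of_cols_def mult.commute)
qed (auto simp: kron_mat_def mult.commute)

lemma shm_mult: "shm K a * shm K b = shm K (a+b)"
proof (rule eq_matI)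
  fix i j assume "i < dim_row (shm K (a+b))" "j < dim_col (shm K (a+b))"
  hence ij: "i < K" "j < K" by (auto simp: shm_def)
  have "(shm K a * shm K b) $$ (i,j) = (\<Sum>l<K. (if i = l + a then 1 else 0) * (if l = j + b then 1 else 0))"
    using ij by (simp add: shm_def scalar_prod_def lessThan_atLeast0)
  also have "\<dots> = (\<Sum>l<K. if l = j + b then (if i = j + b + a then 1 else 0) else 0)"
    by (rule sum.cong) auto
  also have "\<dots> = (if i = j + a + b then 1 else 0)" using ij by (auto simp: add.commute add.left_commute)
  finally show "(shm K a * shm K b) $$ (i,j) = shm K (a+b) $$ (i,j)" using ij by (simp add: shm_def)
qed (auto simp: shm_def)

lemma shm_pow: "shm K d ^\<^sub>m k = shm K (k*d)"
proof (induct k)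
  case 0 show ?case by (rule eq_matI) (auto simp: shm_def)
next
  case (Suc k) thus ?case by (simp add: shm_mult add.commute)
qed

lemma shm_big: "K \<le> d \<Longrightarrow> shm K d = 0\<^sub>m K K"
  by (rule eq_matI) (auto simp: shm_def)


lemma xi_idx: assumes x0: "x0 \<in> carrier_vec n" and i: "i < n*N"
  shows "kron_vec (unit_vec N t) x0 $ i = (if i div n = t then x0 $ (i mod n) else 0)"
proof -
  have n: "n > 0" using i by (cases n) auto
  have "i div n < N" using i by (auto simp: less_mult_imp_div_less mult.commute)
  thus ?thesis using x0 i by (auto simp: kron_vec_def mult.commute unit_vec_def)
qed

lemma xi_carrier: "x0 \<in> carrier_vec n \<Longrightarrow> kron_vec (unit_vec N t) x0 \<in> carrier_vec (n*N)"
  by (auto simp: kron_vec_def mult.commute)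

lemma xi_dim[simp]: "x0 \<in> carrier_vec n \<Longrightarrow> dim_vec (kron_vec (unit_vec N t) x0) = n*N"
  by (auto simp: kron_vec_def mult.commute)

lemma xi_step: assumes x0: "x0 \<in> carrier_vec n"
  shows "shm (n*N) n *\<^sub>v kron_vec (unit_vec N t) x0 = kron_vec (unit_vec N (Suc t)) x0"
proof (rule eq_vecI)
  fix i assume "i < dim_vec (kron_vec (unit_vec N (Suc t)) x0)"
  hence i: "i < n*N" using x0 by simp
  let ?w = "kron_vec (unit_vec N t) x0"
  have "(shm (n*N) n *\<^sub>v ?w) $ i = (\<Sum>j<n*N. (if i = j + n then 1 else 0) * ?w $ j)"
    using i x0 by (simp add: shm_def scalar_prod_def lessThan_atLeast0)
  also have "\<dots> = (\<Sum>j<n*N. if j = i - n then (if n \<le> i then ?w $ (i - n) else 0) else 0)"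
    by (rule sum.cong) auto
  also have "\<dots> = (if n \<le> i then ?w $ (i - n) else 0)" using i by auto
  also have "\<dots> = kron_vec (unit_vec N (Suc t)) x0 $ i"
  proof (cases "n \<le> i")
    case True
    have n: "n > 0" using i by (cases n) auto
    have "i div n = (i - n) div n + 1" "i mod n = (i - n) mod n" using True n
      by (simp_all add: le_div_geq le_mod_geq)
    thus ?thesis using True i xi_idx[OF x0 i] xi_idx[OF x0, of "i - n" N t] by auto
  next
    case False thus ?thesis using xi_idx[OF x0 i] by auto
  qed
  finally show "(shm (n*N) n *\<^sub>v ?w) $ i = kron_vec (unit_vec N (Suc t)) x0 $ i" .
qed (use x0 in \<open>auto simp: shm_def kron_vec_def mult.commute\<close>)

lemma xi_0: assumes x0: "x0 \<in> carrier_vec n" and N: "N > 0"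
  shows "mat (n*N) n (\<lambda>(i,j). if i = j then 1 else 0) *\<^sub>v x0 = kron_vec (unit_vec N 0) x0"
proof (rule eq_vecI)
  fix i assume "i < dim_vec (kron_vec (unit_vec N 0) x0)"
  hence i: "i < n*N" using x0 by simp
  have "(mat (n*N) n (\<lambda>(i,j). if i = j then 1 else 0) *\<^sub>v x0) $ i = (\<Sum>j<n. (if i = j then 1 else 0) * x0 $ j)"
    using i x0 by (simp add: scalar_prod_def lessThan_atLeast0)
  also have "\<dots> = (\<Sum>j<n. if j = i then x0 $ j else 0)" by (rule sum.cong) auto
  also have "\<dots> = (if i < n then x0 $ i else 0)" by simp
  also have "\<dots> = kron_vec (unit_vec N 0) x0 $ i" using xi_idx[OF x0 i] i gr0I
    by (auto simp: div_eq_0_iff)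
  finally show "(mat (n*N) n (\<lambda>(i,j). if i = j then 1 else 0) *\<^sub>v x0) $ i = kron_vec (unit_vec N 0) x0 $ i" .
qed (use x0 in \<open>auto simp: kron_vec_def mult.commute\<close>)

lemma Z_xi0: assumes x0: "x0 \<in> carrier_vec n" and N: "N > 0"
  shows "Zmat n N *\<^sub>v kron_vec (unit_vec N 0) x0 = 0\<^sub>v (n * (N - 1))"
proof (rule eq_vecI)
  fix i assume "i < dim_vec (0\<^sub>v (n * (N - 1)))"
  hence i: "i < n * (N - 1)" by auto
  have n: "n > 0" using i by (cases n) auto
  have iN: "i + n < n * N" using i N by (cases N) auto
  let ?w = "kron_vec (unit_vec N 0) x0"
  have "(Zmat n N *\<^sub>v ?w) $ i = (\<Sum>j<n*N. (if j = i + n then 1 else 0) * ?w $ j)"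
    using i iN x0 by (simp add: Zmat_def scalar_prod_def lessThan_atLeast0)
  also have "\<dots> = (\<Sum>j<n*N. if j = i + n then ?w $ j else 0)" by (rule sum.cong) auto
  also have "\<dots> = ?w $ (i + n)" using iN by simp
  also have "\<dots> = 0" using xi_idx[OF x0 iN] n by auto
  finally show "(Zmat n N *\<^sub>v ?w) $ i = 0\<^sub>v (n * (N - 1)) $ i" using i by simp
qed (auto simp: Zmat_def)

lemma xi_unit: assumes i: "i < n" and t: "t < N"
  shows "kron_vec (unit_vec N t) (unit_vec n i) = unit_vec (n*N) (t*n+i)"
proof (rule eq_vecI)
  fix k assume "k < dim_vec (unit_vec (n*N) (t*n+i))"
  hence k: "k < n*N" by auto
  have "(k div n = t \<and> k mod n = i) \<longleftrightarrow> k = t*n+i" using i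
    by (metis add.commute div_mult_mod_eq mod_mult_self2 mod_less div_mult_self1 div_less
        add_0 gr_implies_not0 mult.commute)
  thus "kron_vec (unit_vec N t) (unit_vec n i) $ k = unit_vec (n*N) (t*n+i) $ k"
    using xi_idx[OF unit_vec_carrier k] i k by (auto simp: unit_vec_def)
qed (auto simp: kron_vec_def mult.commute)

lemma mult_unit: fixes W :: "real mat" assumes W: "W \<in> carrier_mat r K" and l: "l < K" and j: "j < r"
  shows "(W *\<^sub>v unit_vec K l) $ j = W $$ (j, l)"
proof -
  have "(W *\<^sub>v unit_vec K l) $ j = (\<Sum>k<K. W $$ (j,k) * (if k = l then 1 else 0))"
    using W l j by (simp add: scalar_prod_def lessThan_atLeast0 unit_vec_def)
  also have "\<dots> = (\<Sum>k<K. if k = l then W $$ (j,k) else 0)" by (rule sum.cong) auto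
  finally show ?thesis using l by simp
qed


lemma append_rows_idx: assumes A: "A \<in> carrier_mat nr1 nc" and B: "B \<in> carrier_mat nr2 nc"
  and i: "i < nr1 + nr2" and j: "j < nc"
  shows "(A @\<^sub>r B) $$ (i,j) = (if i < nr1 then A $$ (i,j) else B $$ (i - nr1, j))"
  using A B i j by (auto simp: append_rows_def)

lemma append_rows_mult: fixes A :: "real mat"
  assumes A: "A \<in> carrier_mat nr1 nc" and B: "B \<in> carrier_mat nr2 nc" and C: "C \<in> carrier_mat nc k"
  shows "(A @\<^sub>r B) * C = (A * C) @\<^sub>r (B * C)"
proof -
  have cc: "(A*C) @\<^sub>r (B*C) \<in> carrier_mat (nr1+nr2) k" using A B C
    by (intro carrier_append_rows) auto
  have cc2: "(A @\<^sub>r B) * C \<in> carrier_mat (nr1+nr2) k" using A B C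
    by (intro mult_carrier_mat[of _ _ nc] carrier_append_rows) auto
  show ?thesis
proof (rule eq_matI)
  fix i j assume "i < dim_row ((A * C) @\<^sub>r (B * C))" "j < dim_col ((A * C) @\<^sub>r (B * C))"
  hence i: "i < nr1 + nr2" and j: "j < k" using cc by auto
  have AB: "A @\<^sub>r B \<in> carrier_mat (nr1 + nr2) nc" using A B by auto
  have "((A @\<^sub>r B) * C) $$ (i,j) = (\<Sum>l<nc. (A @\<^sub>r B) $$ (i,l) * C $$ (l,j))"
    using AB C i j by (simp add: scalar_prod_def lessThan_atLeast0)
  also have "\<dots> = (\<Sum>l<nc. (if i < nr1 then A $$ (i,l) else B $$ (i - nr1, l)) * C $$ (l,j))"
    by (rule sum.cong, simp, subst append_rows_idx[OF A B i], auto)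
  also have "\<dots> = (if i < nr1 then (A*C) $$ (i,j) else (B*C) $$ (i - nr1, j))"
    using A B C i j by (auto simp: scalar_prod_def lessThan_atLeast0)
  also have "\<dots> = ((A * C) @\<^sub>r (B * C)) $$ (i,j)"
    by (rule append_rows_idx[symmetric], insert A B C i j, auto)
  finally show "((A @\<^sub>r B) * C) $$ (i,j) = ((A * C) @\<^sub>r (B * C)) $$ (i,j)" .
qed (use cc cc2 in auto)
qed

lemma fb_inj: 
  assumes c: "A \<in> carrier_mat nr1 nc1" "B \<in> carrier_mat nr1 nc2" "C \<in> carrier_mat nr2 nc1" "D \<in> carrier_mat nr2 nc2"
  and c': "A' \<in> carrier_mat nr1 nc1" "B' \<in> carrier_mat nr1 nc2" "C' \<in> carrier_mat nr2 nc1" "D' \<in> carrier_mat nr2 nc2"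
  and eq: "four_block_mat A B C D = four_block_mat A' B' C' D'"
  shows "A = A' \<and> B = B' \<and> C = C' \<and> D = D'"
proof (intro conjI)
  have e: "\<And>i j. four_block_mat A B C D $$ (i,j) = four_block_mat A' B' C' D' $$ (i,j)" using eq by simp
  show "A = A'"
  proof (rule eq_matI)
    fix i j assume "i < dim_row A'" "j < dim_col A'"
    thus "A $$ (i,j) = A' $$ (i,j)" using e[of i j] c c' by simp
  qed (use c c' in auto)
  show "B = B'"
  proof (rule eq_matI)
    fix i j assume "i < dim_row B'" "j < dim_col B'"
    thus "B $$ (i,j) = B' $$ (i,j)" using e[of i "j + nc1"] c c' by simp
  qed (use c c' in auto)
  show "C = C'"
  proof (rule eq_matI)
    fix i j assume "i < dim_row C'" "j < dim_col C'"
    thus "C $$ (i,j) = C' $$ (i,j)" using e[of "i + nr1" j] c c' by simp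
  qed (use c c' in auto)
  show "D = D'"
  proof (rule eq_matI)
    fix i j assume "i < dim_row D'" "j < dim_col D'"
    thus "D $$ (i,j) = D' $$ (i,j)" using e[of "i + nr1" "j + nc1"] c c' by simp
  qed (use c c' in auto)
qed

lemma inv_exists: fixes T :: "real mat" assumes T: "T \<in> carrier_mat K K" and d: "det T \<noteq> 0"
  shows "\<exists>Ti \<in> carrier_mat K K. T * Ti = 1\<^sub>m K \<and> Ti * T = 1\<^sub>m K"
proof -
  have "T \<in> Units (ring_mat TYPE(real) K undefined)" by (rule det_non_zero_imp_unit[OF T d])
  thus ?thesis unfolding Units_def by (auto simp: ring_mat_def)
qed

lemma unitri_det: fixes T :: "real mat" assumes T: "T \<in> carrier_mat K K"
  and ut: "\<And>i j. i < K \<Longrightarrow> j < i \<Longrightarrow> T $$ (i,j) = 0"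
  and dg: "\<And>i. i < K \<Longrightarrow> T $$ (i,i) = 1"
  shows "det T = 1"
proof -
  have "upper_triangular T" using T ut unfolding upper_triangular_def by auto
  hence "det T = prod_list (diag_mat T)" using det_upper_triangular T by blast
  also have "diag_mat T = replicate K 1" using T dg
    by (auto simp: diag_mat_def intro!: nth_equalityI)
  finally show ?thesis by simp
qed


lemma cl_x_Suc: "cl_x A B K H G F x0 z0 (Suc t) = A *\<^sub>v cl_x A B K H G F x0 z0 t + B *\<^sub>v cl_u A B K H G F x0 z0 t"
  by (simp add: cl_x_def cl_u_def cl_z_def split: prod.split)
lemma cl_z_Suc: "cl_z A B K H G F x0 z0 (Suc t) = F *\<^sub>v cl_z A B K H G F x0 z0 t + G *\<^sub>v cl_x A B K H G F x0 z0 t"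
  by (simp add: cl_x_def cl_u_def cl_z_def split: prod.split)

lemma traj:
  fixes A B K H G F X U Z :: "real mat"
  assumes A: "A \<in> carrier_mat n n" and B: "B \<in> carrier_mat n m"
  and K: "K \<in> carrier_mat m n" and H: "H \<in> carrier_mat m q"
  and G: "G \<in> carrier_mat q n" and F: "F \<in> carrier_mat q q"
  and X: "X \<in> carrier_mat n (n*N)" and U: "U \<in> carrier_mat m (n*N)" and Z: "Z \<in> carrier_mat q (n*N)"
  and e1: "K * X + H * Z = U" and e2: "G * X + F * Z = Z * shm (n*N) n"
  and dyn: "A * X + B * U = X * shm (n*N) n"
  and x0: "x0 \<in> carrier_vec n"
  and init: "X *\<^sub>v kron_vec (unit_vec N 0) x0 = x0" "Z *\<^sub>v kron_vec (unit_vec N 0) x0 = 0\<^sub>v q"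
  shows "cl_x A B K H G F x0 (0\<^sub>v q) t = X *\<^sub>v kron_vec (unit_vec N t) x0 \<and>
         cl_z A B K H G F x0 (0\<^sub>v q) t = Z *\<^sub>v kron_vec (unit_vec N t) x0"
proof (induct t)
  case 0 thus ?case using init by (simp add: cl_x_def cl_z_def)
next
  case (Suc t)
  let ?xi = "kron_vec (unit_vec N t) x0"
  have xi: "?xi \<in> carrier_vec (n*N)" by (rule xi_carrier[OF x0])
  have Sh: "shm (n*N) n \<in> carrier_mat (n*N) (n*N)" by (simp add: shm_def)
  have xs: "X *\<^sub>v ?xi \<in> carrier_vec n" "Z *\<^sub>v ?xi \<in> carrier_vec q" using X Z xi by auto
  have u: "cl_u A B K H G F x0 (0\<^sub>v q) t = U *\<^sub>v ?xi"
  proof -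
    have "U *\<^sub>v ?xi = (K * X) *\<^sub>v ?xi + (H * Z) *\<^sub>v ?xi"
      unfolding e1[symmetric] using K X H Z xi by (subst add_mult_distrib_mat_vec[of _ m "n*N"]) auto
    also have "\<dots> = K *\<^sub>v (X *\<^sub>v ?xi) + H *\<^sub>v (Z *\<^sub>v ?xi)" using K X H Z xi by auto
    finally show ?thesis using Suc K H xs unfolding cl_u_def by (auto simp: comm_add_vec[of _ m])
  qed
  have "X *\<^sub>v kron_vec (unit_vec N (Suc t)) x0 = X *\<^sub>v (shm (n*N) n *\<^sub>v ?xi)" by (simp add: xi_step[OF x0])
  also have "\<dots> = (A * X + B * U) *\<^sub>v ?xi" unfolding dyn using X Sh xi by auto
  also have "\<dots> = A *\<^sub>v (X *\<^sub>v ?xi) + B *\<^sub>v (U *\<^sub>v ?xi)" using A B X U xi by (subst add_mult_distrib_mat_vec[of _ n "n*N"]) auto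
  finally have 1: "cl_x A B K H G F x0 (0\<^sub>v q) (Suc t) = X *\<^sub>v kron_vec (unit_vec N (Suc t)) x0"
    unfolding cl_x_Suc using Suc u by simp
  have "Z *\<^sub>v kron_vec (unit_vec N (Suc t)) x0 = Z *\<^sub>v (shm (n*N) n *\<^sub>v ?xi)" by (simp add: xi_step[OF x0])
  also have "\<dots> = (G * X + F * Z) *\<^sub>v ?xi" unfolding e2 using Z Sh xi by auto
  also have "\<dots> = G *\<^sub>v (X *\<^sub>v ?xi) + F *\<^sub>v (Z *\<^sub>v ?xi)" using G F X Z xi by (subst add_mult_distrib_mat_vec[of _ q "n*N"]) auto
  finally have 2: "cl_z A B K H G F x0 (0\<^sub>v q) (Suc t) = Z *\<^sub>v kron_vec (unit_vec N (Suc t)) x0"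
    unfolding cl_z_Suc using Suc G F xs by (auto simp: comm_add_vec[of _ q])
  show ?case using 1 2 by blast
qed


lemma fbT: fixes K H G F X Z :: "real mat"
  assumes c: "K \<in> carrier_mat r1 n" "H \<in> carrier_mat r1 q" "G \<in> carrier_mat r2 n" "F \<in> carrier_mat r2 q"
  and X: "X \<in> carrier_mat n c" and Z: "Z \<in> carrier_mat q c"
  shows "four_block_mat K H G F * (X @\<^sub>r Z) = (K * X + H * Z) @\<^sub>r (G * X + F * Z)"
proof -
  have "four_block_mat K H G F * (X @\<^sub>r Z) = four_block_mat K H G F * four_block_mat X (0\<^sub>m n 0) Z (0\<^sub>m q 0)"
    unfolding append_rows_def using X Z by auto
  also have "\<dots> = four_block_mat (K * X + H * Z) (K * 0\<^sub>m n 0 + H * 0\<^sub>m q 0) (G * X + F * Z) (G * 0\<^sub>m n 0 + F * 0\<^sub>m q 0)"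
    by (rule mult_four_block_mat[OF c X _ Z], auto)
  also have "K * 0\<^sub>m n 0 + H * 0\<^sub>m q 0 = 0\<^sub>m r1 0" using c by (intro eq_matI) auto
  also have "G * 0\<^sub>m n 0 + F * 0\<^sub>m q 0 = 0\<^sub>m r2 0" using c by (intro eq_matI) auto
  also have "four_block_mat (K * X + H * Z) (0\<^sub>m r1 0) (G * X + F * Z) (0\<^sub>m r2 0) = (K * X + H * Z) @\<^sub>r (G * X + F * Z)"
    unfolding append_rows_def using c X Z by auto
  finally show ?thesis .
qed

lemma traj_u:
  fixes A B K H G F X U Z :: "real mat"
  assumes A: "A \<in> carrier_mat n n" and B: "B \<in> carrier_mat n m"
  and K: "K \<in> carrier_mat m n" and H: "H \<in> carrier_mat m q"
  and G: "G \<in> carrier_mat q n" and F: "F \<in> carrier_mat q q"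
  and X: "X \<in> carrier_mat n (n*N)" and U: "U \<in> carrier_mat m (n*N)" and Z: "Z \<in> carrier_mat q (n*N)"
  and e1: "K * X + H * Z = U" and e2: "G * X + F * Z = Z * shm (n*N) n"
  and dyn: "A * X + B * U = X * shm (n*N) n"
  and x0: "x0 \<in> carrier_vec n"
  and init: "X *\<^sub>v kron_vec (unit_vec N 0) x0 = x0" "Z *\<^sub>v kron_vec (unit_vec N 0) x0 = 0\<^sub>v q"
  shows "cl_u A B K H G F x0 (0\<^sub>v q) t = U *\<^sub>v kron_vec (unit_vec N t) x0"
proof -
  note tr = traj[OF assms, of t]
  let ?xi = "kron_vec (unit_vec N t) x0"
  have xi: "?xi \<in> carrier_vec (n*N)" by (rule xi_carrier[OF x0])
  have xs: "X *\<^sub>v ?xi \<in> carrier_vec n" "Z *\<^sub>v ?xi \<in> carrier_vec q" using X Z xi by auto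
  have "U *\<^sub>v ?xi = (K * X) *\<^sub>v ?xi + (H * Z) *\<^sub>v ?xi"
    unfolding e1[symmetric] using K X H Z xi by (subst add_mult_distrib_mat_vec[of _ m "n*N"]) auto
  also have "\<dots> = K *\<^sub>v (X *\<^sub>v ?xi) + H *\<^sub>v (Z *\<^sub>v ?xi)" using K X H Z xi by auto
  finally show ?thesis using tr K H xs unfolding cl_u_def by (auto simp: comm_add_vec[of _ m])
qed

lemma xi_N: assumes x0: "x0 \<in> carrier_vec n" shows "kron_vec (unit_vec N N) x0 = 0\<^sub>v (n*N)"
proof (rule eq_vecI)
  fix i assume "i < dim_vec (0\<^sub>v (n*N))"
  hence i: "i < n*N" by simp
  have n: "n > 0" using i by (cases n) auto
  have "i div n < N" using i by (auto simp: less_mult_imp_div_less mult.commute)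
  thus "kron_vec (unit_vec N N) x0 $ i = 0\<^sub>v (n*N) $ i" using xi_idx[OF x0 i] i by auto
qed (use x0 in simp)

theorem theorem1:
  fixes n m p N :: nat and A B C D X U :: "real mat" and s :: "real vec"
  assumes dims: "A \<in> carrier_mat n n" "B \<in> carrier_mat n m" "C \<in> carrier_mat p n" "D \<in> carrier_mat p m"
    and mn: "m \<le> n" and N2: "N \<ge> 2"
    and s: "s \<in> carrier_vec p" "\<forall>i<p. s $ i \<ge> 0"
    and reach: "reachable n m A B"
    and opt: "minimizer1 n m p N A B C D s X U"
  shows
   "(\<exists>K H G F. K \<in> carrier_mat m n \<and> H \<in> carrier_mat m (n * (N - 1)) \<and>
        G \<in> carrier_mat (n * (N - 1)) n \<and> F \<in> carrier_mat (n * (N - 1)) (n * (N - 1)) \<and>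
        four_block_mat K H G F * (X @\<^sub>r Zmat n N) = U @\<^sub>r Vmat n N \<and>
        (\<forall>K' H' G' F'. K' \<in> carrier_mat m n \<and> H' \<in> carrier_mat m (n * (N - 1)) \<and>
           G' \<in> carrier_mat (n * (N - 1)) n \<and> F' \<in> carrier_mat (n * (N - 1)) (n * (N - 1)) \<and>
           four_block_mat K' H' G' F' * (X @\<^sub>r Zmat n N) = U @\<^sub>r Vmat n N \<longrightarrow>
           K' = K \<and> H' = H \<and> G' = G \<and> F' = F))
    \<and> (\<forall>K H G F. K \<in> carrier_mat m n \<and> H \<in> carrier_mat m (n * (N - 1)) \<and>
        G \<in> carrier_mat (n * (N - 1)) n \<and> F \<in> carrier_mat (n * (N - 1)) (n * (N - 1)) \<and>
        four_block_mat K H G F * (X @\<^sub>r Zmat n N) = U @\<^sub>r Vmat n N \<longrightarrow>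
        (\<forall>x0 \<in> carrier_vec n.
           (\<forall>t<N. cl_u A B K H G F x0 (0\<^sub>v (n * (N - 1))) t = U *\<^sub>v kron_vec (unit_vec N t) x0 \<and>
                  cl_x A B K H G F x0 (0\<^sub>v (n * (N - 1))) t = X *\<^sub>v kron_vec (unit_vec N t) x0) \<and>
           cl_x A B K H G F x0 (0\<^sub>v (n * (N - 1))) N = 0\<^sub>v n)
      \<and> (\<forall>i<n. \<forall>t<N. \<forall>j<p.
           - (s $ j) \<le> (C *\<^sub>v cl_x A B K H G F (unit_vec n i) (0\<^sub>v (n * (N - 1))) t
                        + D *\<^sub>v cl_u A B K H G F (unit_vec n i) (0\<^sub>v (n * (N - 1))) t) $ j \<and>
           (C *\<^sub>v cl_x A B K H G F (unit_vec n i) (0\<^sub>v (n * (N - 1))) t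
                        + D *\<^sub>v cl_u A B K H G F (unit_vec n i) (0\<^sub>v (n * (N - 1))) t) $ j \<le> s $ j)
      \<and> schur_stable (four_block_mat (A + B * K) (B * H) G F))"
proof -
  let ?q = "n * (N - 1)"
  let ?Sh = "shm (n*N) n"
  let ?Z = "Zmat n N"
  let ?V = "Vmat n N"
  have N0: "N > 0" using N2 by auto
  have nq: "n + ?q = n * N" using N0 by (cases N) auto
  from opt have "feasible1 n m p N A B C D s X U" unfolding minimizer1_def by auto
  hence X: "X \<in> carrier_mat n (n*N)" and U: "U \<in> carrier_mat m (n*N)"
    and dyn0: "A * X + B * U = X * kron_mat (shiftP N) (1\<^sub>m n)"
    and X0: "X * kron_mat (mat_of_cols N [unit_vec N 0]) (1\<^sub>m n) = 1\<^sub>m n"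
    and bnd: "\<forall>i<p. \<forall>j<n * N. \<bar>(C * X + D * U) $$ (i,j)\<bar> \<le> s $ i"
    unfolding feasible1_def by auto
  have dyn: "A * X + B * U = X * ?Sh" using dyn0 kronM by simp
  have Sh: "?Sh \<in> carrier_mat (n*N) (n*N)" by (simp add: shm_def)
  have Z: "?Z \<in> carrier_mat ?q (n*N)" by (simp add: Zmat_def)
  have Vd: "?V = ?Z * ?Sh" unfolding Vmat_def kronM ..
  have V: "?V \<in> carrier_mat ?q (n*N)" unfolding Vd using Z Sh by auto
  let ?E = "mat (n*N) n (\<lambda>(i,j). if i = j then (1::real) else 0)"
  have XE: "X * ?E = 1\<^sub>m n" using X0 kronE[OF N0] by simp
  have Xid: "X $$ (i,j) = (if i = j then 1 else 0)" if ij: "i < n" "j < n" for i j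
  proof -
    have jN: "j < n * N" proof -
      have "n \<le> n * N" using N0 by simp
      thus ?thesis using ij by linarith
    qed
    have "(X * ?E) $$ (i,j) = (\<Sum>k<n*N. X $$ (i,k) * (if k = j then 1 else 0))"
      using X ij by (simp add: scalar_prod_def lessThan_atLeast0)
    also have "\<dots> = (\<Sum>k<n*N. if k = j then X $$ (i,k) else 0)" by (rule sum.cong) auto
    also have "\<dots> = X $$ (i,j)" using jN by simp
    finally show ?thesis using XE ij by simp
  qed
  define T where "T = X @\<^sub>r ?Z"
  have Tc: "T \<in> carrier_mat (n*N) (n*N)" unfolding T_def using X Z nq
    using carrier_append_rows[OF X Z] by simp
  have Tidx: "T $$ (i,j) = (if i < n then X $$ (i,j) else (if j = i then 1 else 0))"
    if ij: "i < n*N" "j < n*N" for i j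
  proof -
    have "T $$ (i,j) = (if i < n then X $$ (i,j) else ?Z $$ (i - n, j))"
      using append_rows_idx[OF X Z, of i j] ij nq unfolding T_def by simp
    moreover have "\<not> i < n \<Longrightarrow> ?Z $$ (i - n, j) = (if j = i then 1 else 0)"
      using ij nq by (simp add: Zmat_def)
    ultimately show ?thesis by simp
  qed
  have detT: "det T = 1"
  proof (rule unitri_det[OF Tc])
    fix i j assume "i < n*N" "j < i" thus "T $$ (i,j) = 0" using Tidx[of i j] Xid[of i j] by auto
  next
    fix i assume "i < n*N" thus "T $$ (i,i) = 1" using Tidx[of i i] Xid[of i i] by auto
  qed
  obtain Ti where Ti: "Ti \<in> carrier_mat (n*N) (n*N)" "T * Ti = 1\<^sub>m (n*N)" "Ti * T = 1\<^sub>m (n*N)"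
    using inv_exists[OF Tc] detT by auto
  have blk: "four_block_mat K H G F * (X @\<^sub>r ?Z) = U @\<^sub>r ?V \<longleftrightarrow> K * X + H * ?Z = U \<and> G * X + F * ?Z = ?V"
    if c: "K \<in> carrier_mat m n" "H \<in> carrier_mat m ?q" "G \<in> carrier_mat ?q n" "F \<in> carrier_mat ?q ?q"
    for K H G F
  proof -
    have "four_block_mat K H G F * (X @\<^sub>r ?Z) = four_block_mat K H G F * four_block_mat X (0\<^sub>m n 0) ?Z (0\<^sub>m ?q 0)"
      unfolding append_rows_def using X Z by auto
    also have "\<dots> = four_block_mat (K * X + H * ?Z) (K * 0\<^sub>m n 0 + H * 0\<^sub>m ?q 0) (G * X + F * ?Z) (G * 0\<^sub>m n 0 + F * 0\<^sub>m ?q 0)"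
      by (rule mult_four_block_mat[OF c X _ Z], auto)
    also have "K * 0\<^sub>m n 0 + H * 0\<^sub>m ?q 0 = 0\<^sub>m m 0" using c by (intro eq_matI) auto
    also have "G * 0\<^sub>m n 0 + F * 0\<^sub>m ?q 0 = 0\<^sub>m ?q 0" using c by (intro eq_matI) auto
    finally have e1: "four_block_mat K H G F * (X @\<^sub>r ?Z) = four_block_mat (K * X + H * ?Z) (0\<^sub>m m 0) (G * X + F * ?Z) (0\<^sub>m ?q 0)" .
    have e2: "U @\<^sub>r ?V = four_block_mat U (0\<^sub>m m 0) ?V (0\<^sub>m ?q 0)"
      unfolding append_rows_def using U V by auto
    have e: "(four_block_mat K H G F * (X @\<^sub>r ?Z) = U @\<^sub>r ?V) \<longleftrightarrow>
      four_block_mat (K * X + H * ?Z) (0\<^sub>m m 0) (G * X + F * ?Z) (0\<^sub>m ?q 0) = four_block_mat U (0\<^sub>m m 0) ?V (0\<^sub>m ?q 0)"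
      unfolding e1 e2 ..
    have c2: "K * X + H * ?Z \<in> carrier_mat m (n*N)" "G * X + F * ?Z \<in> carrier_mat ?q (n*N)"
      using c X Z by auto
    show ?thesis unfolding e
      using fb_inj[OF c2(1) zero_carrier_mat c2(2) zero_carrier_mat U zero_carrier_mat V zero_carrier_mat]
      by auto
  qed
  have Tinv: "(U @\<^sub>r ?V) * Ti * T = U @\<^sub>r ?V"
  proof -
    have UV: "U @\<^sub>r ?V \<in> carrier_mat (m + ?q) (n*N)" using carrier_append_rows[OF U V] .
    have "(U @\<^sub>r ?V) * Ti * T = (U @\<^sub>r ?V) * (Ti * T)" using UV Ti Tc by (auto intro: assoc_mult_mat)
    thus ?thesis using Ti UV by simp
  qed
  have partA: "\<exists>K H G F. K \<in> carrier_mat m n \<and> H \<in> carrier_mat m ?q \<and>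
        G \<in> carrier_mat ?q n \<and> F \<in> carrier_mat ?q ?q \<and>
        four_block_mat K H G F * (X @\<^sub>r ?Z) = U @\<^sub>r ?V \<and>
        (\<forall>K' H' G' F'. K' \<in> carrier_mat m n \<and> H' \<in> carrier_mat m ?q \<and>
           G' \<in> carrier_mat ?q n \<and> F' \<in> carrier_mat ?q ?q \<and>
           four_block_mat K' H' G' F' * (X @\<^sub>r ?Z) = U @\<^sub>r ?V \<longrightarrow>
           K' = K \<and> H' = H \<and> G' = G \<and> F' = F)"
  proof -
    define W where "W = (U @\<^sub>r ?V) * Ti"
    have "W \<in> carrier_mat (m + ?q) (n*N)" unfolding W_def
      using mult_carrier_mat[OF carrier_append_rows[OF U V] Ti(1)] .
    hence Wc: "W \<in> carrier_mat (m + ?q) (n + ?q)" unfolding nq .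
    obtain K H G F where sb: "split_block W m n = (K, H, G, F)" by (cases "split_block W m n") auto
    note spl = split_block[OF sb, of ?q ?q]
    have c: "K \<in> carrier_mat m n" "H \<in> carrier_mat m ?q" "G \<in> carrier_mat ?q n" "F \<in> carrier_mat ?q ?q"
      and Wfb: "W = four_block_mat K H G F" using spl Wc by auto
    have ex: "four_block_mat K H G F * (X @\<^sub>r ?Z) = U @\<^sub>r ?V"
      unfolding Wfb[symmetric] T_def[symmetric] W_def using Tinv .
    have un: "K' = K \<and> H' = H \<and> G' = G \<and> F' = F"
      if c': "K' \<in> carrier_mat m n" "H' \<in> carrier_mat m ?q" "G' \<in> carrier_mat ?q n" "F' \<in> carrier_mat ?q ?q"
      and e': "four_block_mat K' H' G' F' * (X @\<^sub>r ?Z) = U @\<^sub>r ?V" for K' H' G' F'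
    proof -
      have FB: "four_block_mat K' H' G' F' \<in> carrier_mat (m + ?q) (n*N)" using c' nq
        by (metis four_block_carrier_mat)
      have "four_block_mat K' H' G' F' = four_block_mat K' H' G' F' * (T * Ti)"
        unfolding Ti(2) by (rule right_mult_one_mat[OF FB, symmetric])
      also have "\<dots> = four_block_mat K' H' G' F' * T * Ti" using FB Tc Ti by (auto intro: assoc_mult_mat[symmetric])
      also have "\<dots> = W" unfolding W_def T_def e' ..
      finally show ?thesis unfolding Wfb using fb_inj[OF c' c] by auto
    qed
    have un': "\<forall>K' H' G' F'. K' \<in> carrier_mat m n \<and> H' \<in> carrier_mat m ?q \<and>
           G' \<in> carrier_mat ?q n \<and> F' \<in> carrier_mat ?q ?q \<and>
           four_block_mat K' H' G' F' * (X @\<^sub>r ?Z) = U @\<^sub>r ?V \<longrightarrow>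
           K' = K \<and> H' = H \<and> G' = G \<and> F' = F"
      by (intro allI impI, rule un) auto
    show ?thesis
      by (rule exI[of _ K], rule exI[of _ H], rule exI[of _ G], rule exI[of _ F],
          intro conjI c(1) c(2) c(3) c(4) ex un')
  qed
  have partB: "\<forall>K H G F. K \<in> carrier_mat m n \<and> H \<in> carrier_mat m ?q \<and> G \<in> carrier_mat ?q n \<and> F \<in> carrier_mat ?q ?q \<and> four_block_mat K H G F * (X @\<^sub>r ?Z) = U @\<^sub>r ?V \<longrightarrow> (\<forall>x0 \<in> carrier_vec n.
           (\<forall>t<N. cl_u A B K H G F x0 (0\<^sub>v ?q) t = U *\<^sub>v kron_vec (unit_vec N t) x0 \<and>
                  cl_x A B K H G F x0 (0\<^sub>v ?q) t = X *\<^sub>v kron_vec (unit_vec N t) x0) \<and>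
           cl_x A B K H G F x0 (0\<^sub>v ?q) N = 0\<^sub>v n)
      \<and> (\<forall>i<n. \<forall>t<N. \<forall>j<p.
           - (s $ j) \<le> (C *\<^sub>v cl_x A B K H G F (unit_vec n i) (0\<^sub>v ?q) t
                        + D *\<^sub>v cl_u A B K H G F (unit_vec n i) (0\<^sub>v ?q) t) $ j \<and>
           (C *\<^sub>v cl_x A B K H G F (unit_vec n i) (0\<^sub>v ?q) t
                        + D *\<^sub>v cl_u A B K H G F (unit_vec n i) (0\<^sub>v ?q) t) $ j \<le> s $ j)
      \<and> schur_stable (four_block_mat (A + B * K) (B * H) G F)" (is "\<forall>K H G F. ?P K H G F \<longrightarrow> ?Q K H G F")
  proof (intro allI impI)
    fix K H G F assume h: "K \<in> carrier_mat m n \<and> H \<in> carrier_mat m ?q \<and> G \<in> carrier_mat ?q n \<and> F \<in> carrier_mat ?q ?q \<and> four_block_mat K H G F * (X @\<^sub>r ?Z) = U @\<^sub>r ?V"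
    hence c: "K \<in> carrier_mat m n" "H \<in> carrier_mat m ?q" "G \<in> carrier_mat ?q n" "F \<in> carrier_mat ?q ?q"
      and eq: "four_block_mat K H G F * (X @\<^sub>r ?Z) = U @\<^sub>r ?V" by auto
    from eq have e1: "K * X + H * ?Z = U" and e2: "G * X + F * ?Z = ?Z * ?Sh"
      using blk[OF c] Vd by auto
    have init: "X *\<^sub>v kron_vec (unit_vec N 0) x0 = x0" "?Z *\<^sub>v kron_vec (unit_vec N 0) x0 = 0\<^sub>v ?q"
      if x0: "x0 \<in> carrier_vec n" for x0
    proof -
      have Ec: "?E \<in> carrier_mat (n*N) n" by simp
      have "X *\<^sub>v kron_vec (unit_vec N 0) x0 = X *\<^sub>v (?E *\<^sub>v x0)" using xi_0[OF x0 N0] by simp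
      also have "\<dots> = (X * ?E) *\<^sub>v x0" by (rule assoc_mult_mat_vec[OF X Ec x0, symmetric])
      also have "\<dots> = x0" using XE x0 by simp
      finally show "X *\<^sub>v kron_vec (unit_vec N 0) x0 = x0" .
      show "?Z *\<^sub>v kron_vec (unit_vec N 0) x0 = 0\<^sub>v ?q" by (rule Z_xi0[OF x0 N0])
    qed
    note TR = traj[OF dims(1,2) c X U Z e1 e2 dyn _ init] traj_u[OF dims(1,2) c X U Z e1 e2 dyn _ init]
    have b1: "\<forall>x0 \<in> carrier_vec n.
           (\<forall>t<N. cl_u A B K H G F x0 (0\<^sub>v ?q) t = U *\<^sub>v kron_vec (unit_vec N t) x0 \<and>
                  cl_x A B K H G F x0 (0\<^sub>v ?q) t = X *\<^sub>v kron_vec (unit_vec N t) x0) \<and>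
           cl_x A B K H G F x0 (0\<^sub>v ?q) N = 0\<^sub>v n"
    proof (intro ballI conjI allI impI)
      fix x0 :: "real vec" and t assume x0: "x0 \<in> carrier_vec n"
      show "cl_u A B K H G F x0 (0\<^sub>v ?q) t = U *\<^sub>v kron_vec (unit_vec N t) x0" using TR x0 by blast
      show "cl_x A B K H G F x0 (0\<^sub>v ?q) t = X *\<^sub>v kron_vec (unit_vec N t) x0" using TR x0 by blast
    next
      fix x0 :: "real vec" assume x0: "x0 \<in> carrier_vec n"
      have "cl_x A B K H G F x0 (0\<^sub>v ?q) N = X *\<^sub>v kron_vec (unit_vec N N) x0" using TR x0 by blast
      also have "\<dots> = 0\<^sub>v n" unfolding xi_N[OF x0] using X by auto
      finally show "cl_x A B K H G F x0 (0\<^sub>v ?q) N = 0\<^sub>v n" .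
    qed
    have b2: "- (s $ j) \<le> (C *\<^sub>v cl_x A B K H G F (unit_vec n i) (0\<^sub>v ?q) t
                        + D *\<^sub>v cl_u A B K H G F (unit_vec n i) (0\<^sub>v ?q) t) $ j \<and>
           (C *\<^sub>v cl_x A B K H G F (unit_vec n i) (0\<^sub>v ?q) t
                        + D *\<^sub>v cl_u A B K H G F (unit_vec n i) (0\<^sub>v ?q) t) $ j \<le> s $ j"
      if i: "i < n" and t: "t < N" and j: "j < p" for i t j
    proof -
      have x0: "unit_vec n i \<in> carrier_vec n" by simp
      let ?l = "t * n + i"
      have l: "?l < n * N"
      proof -
        have "t * n + i < t * n + n" using i by simp
        also have "\<dots> = Suc t * n" by simp
        also have "\<dots> \<le> N * n" using t by (intro mult_le_mono1) simp
        finally show ?thesis by (simp add: mult.commute)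
      qed
      have xi: "kron_vec (unit_vec N t) (unit_vec n i) = unit_vec (n*N) ?l" by (rule xi_unit[OF i t])
      have ev: "unit_vec (n*N) ?l \<in> carrier_vec (n*N)" by simp
      have "C *\<^sub>v cl_x A B K H G F (unit_vec n i) (0\<^sub>v ?q) t + D *\<^sub>v cl_u A B K H G F (unit_vec n i) (0\<^sub>v ?q) t
         = C *\<^sub>v (X *\<^sub>v unit_vec (n*N) ?l) + D *\<^sub>v (U *\<^sub>v unit_vec (n*N) ?l)"
        using TR[OF x0] xi by auto
      also have "\<dots> = (C * X + D * U) *\<^sub>v unit_vec (n*N) ?l"
        using dims(3,4) X U ev by (subst add_mult_distrib_mat_vec[of _ p "n*N"]) auto
      finally have "(C *\<^sub>v cl_x A B K H G F (unit_vec n i) (0\<^sub>v ?q) t + D *\<^sub>v cl_u A B K H G F (unit_vec n i) (0\<^sub>v ?q) t) $ j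
          = (C * X + D * U) $$ (j, ?l)"
        using mult_unit[of "C * X + D * U" p "n*N" ?l j] dims(3,4) X U l j by auto
      moreover have "\<bar>(C * X + D * U) $$ (j, ?l)\<bar> \<le> s $ j" using bnd j l by auto
      ultimately show ?thesis by auto
    qed
    define Acl where "Acl = four_block_mat (A + B * K) (B * H) G F"
    have Aclc: "Acl \<in> carrier_mat (n*N) (n*N)"
    proof -
      have "four_block_mat (A + B * K) (B * H) G F \<in> carrier_mat (n + ?q) (n + ?q)"
        by (rule four_block_carrier_mat) (use dims c in auto)
      thus ?thesis unfolding nq Acl_def .
    qed
    have AT: "Acl * T = T * ?Sh"
    proof -
      have BK: "A + B * K \<in> carrier_mat n n" "B * H \<in> carrier_mat n ?q" using dims c by auto
      have "Acl * T = ((A + B * K) * X + B * H * ?Z) @\<^sub>r (G * X + F * ?Z)"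
        unfolding Acl_def T_def by (rule fbT[OF BK c(3,4) X Z])
      also have "(A + B * K) * X + B * H * ?Z = A * X + B * (K * X + H * ?Z)"
      proof -
        have 1: "(A + B * K) * X = A * X + B * K * X"
          by (rule add_mult_distrib_mat[OF dims(1) _ X]) (use dims c in auto)
        have 2: "B * K * X = B * (K * X)" by (rule assoc_mult_mat[OF dims(2) c(1) X])
        have 3: "B * H * ?Z = B * (H * ?Z)" by (rule assoc_mult_mat[OF dims(2) c(2) Z])
        have 4: "B * (K * X + H * ?Z) = B * (K * X) + B * (H * ?Z)"
          by (rule mult_add_distrib_mat[OF dims(2)]) (use c X Z in auto)
        have 5: "A * X + B * (K * X) + B * (H * ?Z) = A * X + (B * (K * X) + B * (H * ?Z))"
          by (rule assoc_add_mat) (use dims c X Z in auto)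
        show ?thesis unfolding 1 2 3 4 5 ..
      qed
      also have "\<dots> = X * ?Sh" using e1 dyn by simp
      also have "(X * ?Sh) @\<^sub>r (G * X + F * ?Z) = T * ?Sh"
        unfolding e2 T_def by (rule append_rows_mult[OF X Z Sh, symmetric])
      finally show ?thesis .
    qed
    have pw: "Acl ^\<^sub>m k * T = T * ?Sh ^\<^sub>m k" for k
    proof (induct k)
      case 0 thus ?case using Tc Aclc Sh by simp
    next
      case (Suc k)
      have P: "Acl ^\<^sub>m k \<in> carrier_mat (n*N) (n*N)" "?Sh ^\<^sub>m k \<in> carrier_mat (n*N) (n*N)" using Aclc Sh by auto
      have "Acl ^\<^sub>m Suc k * T = Acl ^\<^sub>m k * (Acl * T)"
        unfolding pow_mat.simps(2) by (rule assoc_mult_mat[OF P(1) Aclc Tc])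
      also have "\<dots> = (Acl ^\<^sub>m k * T) * ?Sh" unfolding AT by (rule assoc_mult_mat[OF P(1) Tc Sh, symmetric])
      also have "\<dots> = T * ?Sh ^\<^sub>m Suc k" unfolding Suc pow_mat.simps(2) by (rule assoc_mult_mat[OF Tc P(2) Sh])
      finally show ?case .
    qed
    have nil: "Acl ^\<^sub>m N = 0\<^sub>m (n*N) (n*N)"
    proof -
      have P: "Acl ^\<^sub>m N \<in> carrier_mat (n*N) (n*N)" using Aclc by auto
      have "Acl ^\<^sub>m N = Acl ^\<^sub>m N * (T * Ti)"
        unfolding Ti(2) by (rule right_mult_one_mat[OF P, symmetric])
      also have "\<dots> = (Acl ^\<^sub>m N * T) * Ti" by (rule assoc_mult_mat[OF P Tc Ti(1), symmetric])
      also have "?Sh ^\<^sub>m N = 0\<^sub>m (n*N) (n*N)" unfolding shm_pow by (rule shm_big) simp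
      hence "(Acl ^\<^sub>m N * T) * Ti = 0\<^sub>m (n*N) (n*N)" unfolding pw using Tc Ti by simp
      finally show ?thesis .
    qed
    have b3: "schur_stable Acl" unfolding schur_stable_def
    proof (intro allI impI)
      fix ev assume "eigenvalue (map_mat complex_of_real Acl) ev"
      then obtain v where v: "eigenvector (map_mat complex_of_real Acl) v ev" unfolding eigenvalue_def by auto
      have Mc: "map_mat complex_of_real Acl \<in> carrier_mat (n*N) (n*N)" using Aclc by simp
      have "map_mat complex_of_real Acl ^\<^sub>m N *\<^sub>v v = ev ^ N \<cdot>\<^sub>v v" by (rule eigenvector_pow[OF Mc v])
      moreover have "map_mat complex_of_real Acl ^\<^sub>m N = 0\<^sub>m (n*N) (n*N)"
      proof -
        have "map_mat complex_of_real Acl ^\<^sub>m N = map_mat complex_of_real (Acl ^\<^sub>m N)"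
          by (rule of_real_hom.mat_hom_pow[OF Aclc, of N, symmetric])
        also have "\<dots> = 0\<^sub>m (n*N) (n*N)" unfolding nil by (rule eq_matI) auto
        finally show ?thesis .
      qed
      moreover have vc: "v \<in> carrier_vec (n*N)" "v \<noteq> 0\<^sub>v (n*N)" using v Mc unfolding eigenvector_def by auto
      moreover have "0\<^sub>m (n*N) (n*N) *\<^sub>v v = 0\<^sub>v (n*N)" using vc(1) by (intro eq_vecI) (auto simp: scalar_prod_def)
      ultimately have z: "ev ^ N \<cdot>\<^sub>v v = 0\<^sub>v (n*N)" by auto
      obtain k where k: "k < n*N" "v $ k \<noteq> 0" using vc by (metis eq_vecI carrier_vecD index_zero_vec)
      have "(ev ^ N \<cdot>\<^sub>v v) $ k = 0" using z k by simp
      hence "ev ^ N * v $ k = 0" using k vc by simp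
      hence "ev = 0" using k by simp
      thus "cmod ev < 1" by simp
    qed
    have b2': "\<forall>i<n. \<forall>t<N. \<forall>j<p.
           - (s $ j) \<le> (C *\<^sub>v cl_x A B K H G F (unit_vec n i) (0\<^sub>v ?q) t
                        + D *\<^sub>v cl_u A B K H G F (unit_vec n i) (0\<^sub>v ?q) t) $ j \<and>
           (C *\<^sub>v cl_x A B K H G F (unit_vec n i) (0\<^sub>v ?q) t
                        + D *\<^sub>v cl_u A B K H G F (unit_vec n i) (0\<^sub>v ?q) t) $ j \<le> s $ j"
      using b2 by simp
    show "?Q K H G F" using conjI[OF b1 conjI[OF b2' b3[unfolded Acl_def]]] .
  qed
  show ?thesis using partA partB by (rule conjI)
qed

end
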